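(* Let $\mathtt{L}$ be a line of $\mathcal{S}$ and $\theta$ a point of $\mathcal{S}$. If $\theta$ has distance $3$ from two points of $\mathtt{L}$, then $\theta$ has distance $2$ from the third point of $\mathtt{L}$.
   Context: Let $S=(P,L)$ and $S'=(P',L')$ be generalized quadrangles of order $(2,2)$ (every line has 3 points, every point lies on 3 lines, and for each point $x$ and line $l\not\ni x$ exactly one point of $l$ is collinear with $x$), with an isomorphism $x\mapsto x'$ from $S$ to $S'$. In a point-line geometry, $x^{\perp}$ is $x$ together with all points collinear with $x$, and $A^{\perp}=\bigcap_{a\in A}a^{\perp}$. A triad is a set of three pairwise non-collinear points, complete if $|T^{\perp}|=3$. The geometry $\mathcal{S}=(\mathcal{P},\mathcal{L})$ has point set $\mathcal{P}=\{(x,y')\in P\times P':y'\in x'^{\perp}\}$ and lines all $3$-subsets $\{(x,u'),(y,v'),(z,w')\}$ of $\mathcal{P}$ where $T=\{x,y,z\}$ (three distinct points) is a line or a complete triad of $S$ and $\{u',v',w'\}=T'^{\perp}$ in $S'$ with $u',v',w'$ distinct. Distance is measured in the collinearity graph of $\mathcal{S}$. *)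

theory Defs
  imports Main
begin

definition collinear :: "'p set set \<Rightarrow> 'p \<Rightarrow> 'p \<Rightarrow> bool" where
  "collinear L x y \<longleftrightarrow> x \<noteq> y \<and> (\<exists>l\<in>L. x \<in> l \<and> y \<in> l)"

definition perp :: "'p set \<Rightarrow> 'p set set \<Rightarrow> 'p \<Rightarrow> 'p set" where
  "perp P L x = {y \<in> P. y = x \<or> collinear L x y}"

definition setperp :: "'p set \<Rightarrow> 'p set set \<Rightarrow> 'p set \<Rightarrow> 'p set" where
  "setperp P L A = {y \<in> P. \<forall>a\<in>A. y \<in> perp P L a}"

definition GQ22 :: "'p set \<Rightarrow> 'p set set \<Rightarrow> bool" where
  "GQ22 P L \<longleftrightarrow>
     (\<forall>l\<in>L. l \<subseteq> P \<and> card l = 3) \<and>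
     (\<forall>x\<in>P. card {l\<in>L. x \<in> l} = 3) \<and>
     (\<forall>x\<in>P. \<forall>l\<in>L. x \<notin> l \<longrightarrow> (\<exists>!y. y \<in> l \<and> collinear L x y))"

definition geom_iso :: "('a \<Rightarrow> 'b) \<Rightarrow> 'a set \<Rightarrow> 'a set set \<Rightarrow> 'b set \<Rightarrow> 'b set set \<Rightarrow> bool" where
  "geom_iso f P L P' L' \<longleftrightarrow> bij_betw f P P' \<and> (\<lambda>l. f ` l) ` L = L'"

definition triad :: "'p set \<Rightarrow> 'p set set \<Rightarrow> 'p set \<Rightarrow> bool" where
  "triad P L T \<longleftrightarrow> T \<subseteq> P \<and> card T = 3 \<and>
     (\<forall>x\<in>T. \<forall>y\<in>T. x \<noteq> y \<longrightarrow> \<not> collinear L x y)"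

definition complete_triad :: "'p set \<Rightarrow> 'p set set \<Rightarrow> 'p set \<Rightarrow> bool" where
  "complete_triad P L T \<longleftrightarrow> triad P L T \<and> card (setperp P L T) = 3"

definition SPts :: "('a \<Rightarrow> 'b) \<Rightarrow> 'a set \<Rightarrow> 'b set \<Rightarrow> 'b set set \<Rightarrow> ('a \<times> 'b) set" where
  "SPts f P P' L' = {(x, y). x \<in> P \<and> y \<in> perp P' L' (f x)}"

definition SLines :: "('a \<Rightarrow> 'b) \<Rightarrow> 'a set \<Rightarrow> 'a set set \<Rightarrow> 'b set \<Rightarrow> 'b set set
    \<Rightarrow> ('a \<times> 'b) set set" where
  "SLines f P L P' L' =
    {{(x, u), (y, v), (z, w)} | x y z u v w.
       x \<noteq> y \<and> x \<noteq> z \<and> y \<noteq> z \<and>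
       ({x, y, z} \<in> L \<or> complete_triad P L {x, y, z}) \<and>
       u \<noteq> v \<and> u \<noteq> w \<and> v \<noteq> w \<and>
       {u, v, w} = setperp P' L' (f ` {x, y, z}) \<and>
       {(x, u), (y, v), (z, w)} \<subseteq> SPts f P P' L'}"

definition adj :: "'p set \<Rightarrow> 'p set set \<Rightarrow> ('p \<times> 'p) set" where
  "adj P L = {(x, y). x \<in> P \<and> y \<in> P \<and> collinear L x y}"

definition has_dist :: "('p \<times> 'p) set \<Rightarrow> 'p \<Rightarrow> 'p \<Rightarrow> nat \<Rightarrow> bool" where
  "has_dist A a b n \<longleftrightarrow> (a, b) \<in> A ^^ n \<and> (\<forall>k<n. (a, b) \<notin> A ^^ k)"

end

theory Submission
  imports Defs
begin

lemma card3_other: "card S = 3 \<Longrightarrow> a \<in> S \<Longrightarrow> \<exists>c\<in>S. c \<noteq> a"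
  by (auto simp: card_3_iff)

lemma card3_third: "card S = 3 \<Longrightarrow> a \<in> S \<Longrightarrow> b \<in> S \<Longrightarrow> \<exists>c\<in>S. c \<noteq> a \<and> c \<noteq> b"
  by (auto simp: card_3_iff)

lemma card3_all: "card S = 3 \<Longrightarrow> a \<in> S \<Longrightarrow> b \<in> S \<Longrightarrow> c \<in> S \<Longrightarrow> a \<noteq> b \<Longrightarrow> a \<noteq> c \<Longrightarrow> b \<noteq> c \<Longrightarrow> S = {a,b,c}"
  by (auto simp: card_3_iff)

locale gq =
  fixes P :: "'p set" and L :: "'p set set"
  assumes gq: "GQ22 P L"
begin

abbreviation col where "col \<equiv> collinear L"
abbreviation pe where "pe \<equiv> perp P L"
abbreviation sp where "sp \<equiv> setperp P L"

lemma gq1: "\<forall>l\<in>L. l \<subseteq> P \<and> card l = 3" using gq unfolding GQ22_def by (elim conjE)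
lemma gq2: "\<forall>x\<in>P. card {l\<in>L. x \<in> l} = 3" using gq unfolding GQ22_def by (elim conjE)
lemma line_sub: "l \<in> L \<Longrightarrow> l \<subseteq> P" using gq1 by blast
lemma line_card: "l \<in> L \<Longrightarrow> card l = 3" using gq1 by blast
lemma pt_lines: "x \<in> P \<Longrightarrow> card {l\<in>L. x \<in> l} = 3" using gq2 by blast
lemma gq_ax: assumes "x \<in> P" "l \<in> L" "x \<notin> l" shows "\<exists>!y. y \<in> l \<and> col x y"
proof -
  have "\<forall>x\<in>P. \<forall>l\<in>L. x \<notin> l \<longrightarrow> (\<exists>!y. y \<in> l \<and> col x y)" using gq unfolding GQ22_def by (elim conjE)
  then show ?thesis using assms by blast
qed

lemma col_sym: "col x y = col y x" unfolding collinear_def by blast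
lemma col_symI: "col x y \<Longrightarrow> col y x" unfolding collinear_def by blast
lemma col_P: "col x y \<Longrightarrow> x \<in> P \<and> y \<in> P" unfolding collinear_def using line_sub by blast
lemma col_ne: "col x y \<Longrightarrow> x \<noteq> y" unfolding collinear_def by blast
lemma in_line_col: "l \<in> L \<Longrightarrow> x \<in> l \<Longrightarrow> y \<in> l \<Longrightarrow> x \<noteq> y \<Longrightarrow> col x y"
  unfolding collinear_def by blast
lemma colE: "col x y \<Longrightarrow> (\<And>l. l \<in> L \<Longrightarrow> x \<in> l \<Longrightarrow> y \<in> l \<Longrightarrow> x \<noteq> y \<Longrightarrow> thesis) \<Longrightarrow> thesis"
  unfolding collinear_def by blast

lemma pe_iff: "y \<in> pe x \<longleftrightarrow> y \<in> P \<and> (y = x \<or> col x y)"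
  unfolding perp_def by blast
lemma pe_sym: "y \<in> pe x \<Longrightarrow> x \<in> P \<Longrightarrow> x \<in> pe y"
  unfolding pe_iff using col_symI by blast
lemma pe_refl: "x \<in> P \<Longrightarrow> x \<in> pe x" unfolding pe_iff by blast
lemma pe_col: "y \<in> pe x \<Longrightarrow> y \<noteq> x \<Longrightarrow> col x y" unfolding pe_iff by blast
lemma col_pe: "col x y \<Longrightarrow> y \<in> pe x" unfolding pe_iff using col_P by blast
lemma sp_iff: "y \<in> sp A \<longleftrightarrow> y \<in> P \<and> (\<forall>a\<in>A. y \<in> pe a)"
  unfolding setperp_def by blast
lemma line_pe: "l \<in> L \<Longrightarrow> x \<in> l \<Longrightarrow> y \<in> l \<Longrightarrow> y \<in> pe x"
  unfolding pe_iff using in_line_col line_sub by blast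

lemma uniq: "z \<in> P \<Longrightarrow> l \<in> L \<Longrightarrow> z \<notin> l \<Longrightarrow> a \<in> l \<Longrightarrow> b \<in> l \<Longrightarrow> col z a \<Longrightarrow> col z b \<Longrightarrow> a = b"
  using gq_ax[of z l] by (metis)

lemma two_lines: "l \<in> L \<Longrightarrow> l' \<in> L \<Longrightarrow> x \<noteq> y \<Longrightarrow> x \<in> l \<Longrightarrow> y \<in> l \<Longrightarrow> x \<in> l' \<Longrightarrow> y \<in> l' \<Longrightarrow> l = l'"
proof (rule ccontr)
  assume a: "l \<in> L" "l' \<in> L" "x \<noteq> y" "x \<in> l" "y \<in> l" "x \<in> l'" "y \<in> l'" "l \<noteq> l'"
  have "\<not> l' \<subseteq> l"
  proof
    assume "l' \<subseteq> l"
    moreover have "finite l" using line_card[OF a(1)] by (intro card_ge_0_finite) simp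
    ultimately show False using card_subset_eq[of l l'] line_card[OF a(1)] line_card[OF a(2)] a(8) by simp
  qed
  then obtain z where z: "z \<in> l'" "z \<notin> l" by blast
  have "z \<in> P" using z line_sub a by blast
  have "col z x" using in_line_col[OF a(2) z(1) a(6)] z a by blast
  moreover have "col z y" using in_line_col[OF a(2) z(1) a(7)] z a by blast
  ultimately show False using uniq[OF \<open>z \<in> P\<close> a(1) z(2) a(4) a(5)] a(3) by blast
qed

lemma line_third: "l \<in> L \<Longrightarrow> x \<in> l \<Longrightarrow> y \<in> l \<Longrightarrow> x \<noteq> y \<Longrightarrow> \<exists>z. l = {x,y,z} \<and> z \<noteq> x \<and> z \<noteq> y"
proof -
  assume a: "l \<in> L" "x \<in> l" "y \<in> l" "x \<noteq> y"
  obtain z where z: "z \<in> l" "z \<noteq> x" "z \<noteq> y" using card3_third[OF line_card[OF a(1)] a(2,3)] by blast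
  have "l = {x,y,z}" using card3_all[OF line_card[OF a(1)] a(2,3) z(1) a(4)] z by metis
  then show ?thesis using z by blast
qed

lemma triangle: "col x y \<Longrightarrow> col y z \<Longrightarrow> col x z \<Longrightarrow> \<exists>l\<in>L. x \<in> l \<and> y \<in> l \<and> z \<in> l"
proof -
  assume a: "col x y" "col y z" "col x z"
  obtain l where l: "l \<in> L" "x \<in> l" "y \<in> l" "x \<noteq> y" using a(1) by (rule colE)
  have "z \<in> P" using col_P a by blast
  have "z \<in> l"
  proof (rule ccontr)
    assume "z \<notin> l"
    then have "x = y" using uniq[OF \<open>z \<in> P\<close> l(1) _ l(2) l(3)] a col_symI by blast
    then show False using l by blast
  qed
  then show ?thesis using l by blast
qed

lemma proj: "p \<in> P \<Longrightarrow> l \<in> L \<Longrightarrow> p \<notin> l \<Longrightarrow> \<exists>q\<in>l. col p q"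
  using gq_ax[of p l] by blast

lemma fin_lines: "x \<in> P \<Longrightarrow> finite {l\<in>L. x \<in> l}"
  using pt_lines[of x] by (intro card_ge_0_finite) simp

lemma four_lines: "x \<in> P \<Longrightarrow> l1 \<in> L \<Longrightarrow> l2 \<in> L \<Longrightarrow> l3 \<in> L \<Longrightarrow> l4 \<in> L \<Longrightarrow>
  x \<in> l1 \<Longrightarrow> x \<in> l2 \<Longrightarrow> x \<in> l3 \<Longrightarrow> x \<in> l4 \<Longrightarrow>
  l1 \<noteq> l2 \<Longrightarrow> l1 \<noteq> l3 \<Longrightarrow> l1 \<noteq> l4 \<Longrightarrow> l2 \<noteq> l3 \<Longrightarrow> l2 \<noteq> l4 \<Longrightarrow> l3 \<noteq> l4 \<Longrightarrow> False"
proof -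
  assume a: "x \<in> P" "l1 \<in> L" "l2 \<in> L" "l3 \<in> L" "l4 \<in> L" "x \<in> l1" "x \<in> l2" "x \<in> l3" "x \<in> l4"
    "l1 \<noteq> l2" "l1 \<noteq> l3" "l1 \<noteq> l4" "l2 \<noteq> l3" "l2 \<noteq> l4" "l3 \<noteq> l4"
  have "{l1,l2,l3,l4} \<subseteq> {l\<in>L. x \<in> l}" using a by blast
  then have "card {l1,l2,l3,l4} \<le> card {l\<in>L. x \<in> l}" by (rule card_mono[OF fin_lines[OF a(1)]])
  then have "card {l1,l2,l3,l4} \<le> 3" using pt_lines[OF a(1)] by simp
  moreover have "card {l1,l2,l3,l4} = 4" using a by simp
  ultimately show False by simp
qed


lemma quad: "col t s \<Longrightarrow> col t s' \<Longrightarrow> col t' s \<Longrightarrow> col t' s' \<Longrightarrow> t \<noteq> t' \<Longrightarrow> s \<noteq> s' \<Longrightarrow> col s s' \<Longrightarrow> col t t'"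
proof -
  assume a: "col t s" "col t s'" "col t' s" "col t' s'" "t \<noteq> t'" "s \<noteq> s'" "col s s'"
  obtain l where l: "l \<in> L" "s \<in> l" "s' \<in> l" using a(7) by (rule colE)
  have "t \<in> l"
  proof (rule ccontr)
    assume "t \<notin> l" then show False using uniq[OF _ l(1) _ l(2) l(3) a(1) a(2)] col_P a by blast
  qed
  moreover have "t' \<in> l"
  proof (rule ccontr)
    assume "t' \<notin> l" then show False using uniq[OF _ l(1) _ l(2) l(3) a(3) a(4)] col_P a by blast
  qed
  ultimately show ?thesis using in_line_col[OF l(1)] a(5) by blast
qed

lemma sp2_col: assumes "q \<in> sp {x,y}" "\<not> col x y" "x \<noteq> y" "x \<in> P" shows "col x q \<and> col y q"
proof -
  have qx: "q \<in> pe x" and qy: "q \<in> pe y" using assms(1) unfolding sp_iff by auto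
  have "q \<noteq> x"
  proof
    assume "q = x" then have "x \<in> pe y" using qy by simp
    then show False using pe_col assms(2,3) col_symI by metis
  qed
  moreover have "q \<noteq> y"
  proof
    assume "q = y" then have "y \<in> pe x" using qx by simp
    then show False using pe_col assms(2,3) by metis
  qed
  ultimately show ?thesis using pe_col qx qy by blast
qed

lemma sp2_ncol: assumes "\<not> col a b" "a \<noteq> b" "a \<in> P" "p \<in> sp {a,b}" "p' \<in> sp {a,b}" "p \<noteq> p'"
  shows "\<not> col p p'"
proof
  assume c: "col p p'"
  have "col a p \<and> col b p" "col a p' \<and> col b p'" using sp2_col assms by blast+
  then have "col a b" using quad[of a p p' b] assms c by blast
  then show False using assms by blast
qed

lemma pp_line: assumes "l \<in> L" "x \<in> l" "y \<in> l" "x \<noteq> y" shows "sp {x,y} = l"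
proof
  show "l \<subseteq> sp {x,y}"
  proof
    fix q assume q: "q \<in> l"
    have "q \<in> pe x" "q \<in> pe y" using line_pe[OF assms(1)] q assms by blast+
    moreover have "q \<in> P" using line_sub[OF assms(1)] q by blast
    ultimately show "q \<in> sp {x,y}" by (simp add: sp_iff)
  qed
next
  show "sp {x,y} \<subseteq> l"
  proof
    fix q assume q: "q \<in> sp {x,y}"
    then have qP: "q \<in> P" and qx: "q \<in> pe x" and qy: "q \<in> pe y" unfolding sp_iff by auto
    show "q \<in> l"
    proof (rule ccontr)
      assume "q \<notin> l"
      then have "q \<noteq> x" "q \<noteq> y" using assms by auto
      then have "col q x" "col q y" using qx qy pe_col col_symI by blast+
      then show False using uniq[OF qP assms(1) \<open>q \<notin> l\<close> assms(2) assms(3)] assms(4) by blast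
    qed
  qed
qed

lemma sp_line: assumes "l \<in> L" shows "sp l = l"
proof -
  obtain x y z where l: "l = {x,y,z}" "x \<noteq> y" "y \<noteq> z" "x \<noteq> z" using line_card[OF assms] card_3_iff by metis
  have "sp l \<subseteq> sp {x,y}" unfolding setperp_def l by blast
  also have "\<dots> = l" using pp_line[OF assms] l by blast
  finally have "sp l \<subseteq> l" .
  moreover have "l \<subseteq> sp l"
  proof
    fix q assume q: "q \<in> l"
    then show "q \<in> sp l" using line_pe[OF assms _ q] line_sub[OF assms] by (auto simp: sp_iff)
  qed
  ultimately show ?thesis by blast
qed

lemma pp_noncol_card:
  assumes xP: "x \<in> P" and yP: "y \<in> P" and xy: "x \<noteq> y" and nc: "\<not> col x y"
  shows "card (sp {x,y}) = 3"
proof -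
  let ?Lx = "{l\<in>L. x \<in> l}"
  define h where "h l = (THE q. q \<in> l \<and> col y q)" for l
  have yl: "y \<notin> l" if "l \<in> ?Lx" for l
    using that in_line_col[of l x y] xy nc by blast
  have hl: "h l \<in> l \<and> col y (h l)" if "l \<in> ?Lx" for l
    unfolding h_def using theI'[OF gq_ax[OF yP _ yl[OF that]]] that by blast
  have hu: "q = h l" if "l \<in> ?Lx" "q \<in> l" "col y q" for l q
    using uniq[OF yP _ yl[OF that(1)] that(2) _ that(3)] hl[OF that(1)] that(1) by blast
  have eq: "sp {x,y} = h ` ?Lx"
  proof
    show "sp {x,y} \<subseteq> h ` ?Lx"
    proof
      fix q assume q: "q \<in> sp {x,y}"
      then have "col x q" "col y q" using sp2_col nc xy xP by blast+
      then obtain l where "l \<in> L" "x \<in> l" "q \<in> l" by (meson colE)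
      then show "q \<in> h ` ?Lx" using hu[of l q] \<open>col y q\<close> by blast
    qed
  next
    show "h ` ?Lx \<subseteq> sp {x,y}"
    proof
      fix q assume "q \<in> h ` ?Lx"
      then obtain l where l: "l \<in> ?Lx" "q = h l" by blast
      then have "q \<in> l" "col y q" using hl by blast+
      then show "q \<in> sp {x,y}" unfolding sp_iff using line_pe[of l x q] l col_pe col_symI line_sub
        by blast
    qed
  qed
  have "inj_on h ?Lx"
  proof (rule inj_onI)
    fix l1 l2 assume a: "l1 \<in> ?Lx" "l2 \<in> ?Lx" "h l1 = h l2"
    have "h l1 \<noteq> x" using hl[OF a(1)] nc col_symI by metis
    then show "l1 = l2" using two_lines[of l1 l2 x "h l1"] hl[OF a(1)] hl[OF a(2)] a by auto
  qed
  then have "card (h ` ?Lx) = card ?Lx" by (rule card_image)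
  then show ?thesis using eq pt_lines[OF xP] by simp
qed

lemma pp_card: assumes "x \<in> P" "y \<in> P" "x \<noteq> y" shows "card (sp {x,y}) = 3"
proof (cases "col x y")
  case True
  then obtain l where "l \<in> L" "x \<in> l" "y \<in> l" by (rule colE)
  then show ?thesis using pp_line line_card assms by metis
next
  case False
  then show ?thesis using pp_noncol_card assms by blast
qed

lemma pp_fin: "x \<in> P \<Longrightarrow> y \<in> P \<Longrightarrow> x \<noteq> y \<Longrightarrow> finite (sp {x,y})"
  by (rule card_ge_0_finite) (simp add: pp_card)


lemma pp_mem: "q \<in> sp {x,y} \<longleftrightarrow> q \<in> pe x \<and> q \<in> pe y"
  unfolding sp_iff pe_iff by blast

lemma regular:
  assumes xP: "x \<in> P" and yP: "y \<in> P" and xy: "x \<noteq> y" and nc: "\<not> col x y"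
  shows "\<exists>z\<in>P. z \<noteq> x \<and> z \<noteq> y \<and> \<not> col x z \<and> \<not> col y z \<and> sp {x,y,z} = sp {x,y}"
proof -
  obtain a b c where abc: "sp {x,y} = {a,b,c}" "a \<noteq> b" "b \<noteq> c" "a \<noteq> c"
    using pp_card[OF xP yP xy] card_3_iff by metis
  have inS: "a \<in> sp {x,y}" "b \<in> sp {x,y}" "c \<in> sp {x,y}" using abc by auto
  have cxa: "col x a \<and> col y a" "col x b \<and> col y b" "col x c \<and> col y c"
    using sp2_col[OF _ nc xy xP] inS by blast+
  have abP: "a \<in> P" "b \<in> P" "c \<in> P" using inS unfolding sp_iff by auto
  have nab: "\<not> col a b" "\<not> col a c" "\<not> col b c"
    using sp2_ncol[OF nc xy xP] inS abc by blast+
  have "x \<in> sp {a,b}" "y \<in> sp {a,b}"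
    using cxa col_pe by (auto simp: pp_mem intro: col_symI)
  then obtain z where z: "z \<in> sp {a,b}" "z \<noteq> x" "z \<noteq> y"
    using card3_third[OF pp_card[OF abP(1,2) abc(2)]] by blast
  have zP: "z \<in> P" using z unfolding sp_iff by blast
  have cz: "col a z" "col b z" using sp2_col[OF z(1) nab(1) abc(2) abP(1)] by blast+
  have nxz: "\<not> col x z" using sp2_ncol[OF nab(1) abc(2) abP(1) \<open>x \<in> sp {a,b}\<close> z(1)] z(2) by metis
  have nyz: "\<not> col y z" using sp2_ncol[OF nab(1) abc(2) abP(1) \<open>y \<in> sp {a,b}\<close> z(1)] z(3) by metis
  have zc: "z \<in> pe c"
  proof (rule ccontr)
    assume zc: "z \<notin> pe c"
    then have ncz: "\<not> col c z" using col_pe by blast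
    have "col c x" using cxa col_symI by blast
    then obtain lx where lx: "lx \<in> L" "c \<in> lx" "x \<in> lx" "c \<noteq> x" by (rule colE)
    have "col c y" using cxa col_symI by blast
    then obtain ly where ly: "ly \<in> L" "c \<in> ly" "y \<in> ly" "c \<noteq> y" by (rule colE)
    have lxy: "lx \<noteq> ly" using lx ly in_line_col[of lx x y] xy nc by blast
    have getp: "\<exists>e\<in>l. col z e \<and> e \<noteq> c \<and> e \<noteq> w \<and> col c e \<and> col w e"
      if l: "l \<in> L" "c \<in> l" "w \<in> l" "c \<noteq> w" and nwz: "\<not> col w z" and wz: "w \<noteq> z" for l w
    proof -
      have "z \<notin> l"
      proof
        assume "z \<in> l" then have "col w z" using in_line_col[OF l(1) l(3)] wz by blast
        then show False using nwz by blast
      qed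
      then obtain e where e: "e \<in> l" "col z e" using proj[OF zP l(1)] by blast
      have "e \<noteq> c" using e ncz col_symI by blast
      moreover have "e \<noteq> w" using e nwz col_symI by blast
      ultimately show ?thesis using e in_line_col[OF l(1)] l by blast
    qed
    obtain e where e: "e \<in> lx" "col z e" "e \<noteq> c" "e \<noteq> x" "col c e" "col x e"
      using getp[OF lx nxz z(2)[symmetric]] by blast
    obtain e' where e': "e' \<in> ly" "col z e'" "e' \<noteq> c" "e' \<noteq> y" "col c e'" "col y e'"
      using getp[OF ly nyz z(3)[symmetric]] by blast
    have ee: "e \<noteq> e'"
    proof
      assume "e = e'" then have "lx = ly" using two_lines[OF lx(1) ly(1) e(3)[symmetric]] lx ly e e' by blast
      then show False using lxy by blast
    qed
    obtain la where la: "la \<in> L" "a \<in> la" "z \<in> la" using cz(1) by (rule colE)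
    obtain lb where lb: "lb \<in> L" "b \<in> lb" "z \<in> lb" using cz(2) by (rule colE)
    have lab: "la \<noteq> lb" using la lb in_line_col[of la a b] abc(2) nab(1) by blast
    have notin: "f \<notin> l"
      if l: "l \<in> L" "d \<in> l" "z \<in> l" and w: "col w f" "col w d" "\<not> col w z" "w \<in> P" "w \<noteq> z"
        and fd: "col c f" "\<not> col d c" for l d f w
    proof
      assume f: "f \<in> l"
      have "w \<notin> l" using l w in_line_col[OF l(1)] by blast
      then have "f = d" using uniq[OF w(4) l(1) _ f l(2) w(1) w(2)] by blast
      then show False using fd col_symI by blast
    qed
    have "e \<notin> la" using notin[OF la(1,2,3) e(6) _ nxz xP z(2)[symmetric] e(5)] cxa nab by blast
    moreover have "e \<notin> lb" using notin[OF lb(1,2,3) e(6) _ nxz xP z(2)[symmetric] e(5)] cxa nab by blast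
    moreover have "e' \<notin> la" using notin[OF la(1,2,3) e'(6) _ nyz yP z(3)[symmetric] e'(5)] cxa nab by blast
    moreover have "e' \<notin> lb" using notin[OF lb(1,2,3) e'(6) _ nyz yP z(3)[symmetric] e'(5)] cxa nab by blast
    moreover obtain le where le: "le \<in> L" "z \<in> le" "e \<in> le" using e(2) by (rule colE)
    moreover obtain le' where le': "le' \<in> L" "z \<in> le'" "e' \<in> le'" using e'(2) by (rule colE)
    ultimately have "le = le'" using four_lines[OF zP la(1) lb(1) le(1) le'(1) la(3) lb(3) le(2) le'(2) lab] by blast
    then have "col e e'" using in_line_col[OF le(1)] le le' ee by blast
    then obtain l3 where l3: "l3 \<in> L" "c \<in> l3" "e \<in> l3" "e' \<in> l3" using triangle[OF e(5) _ e'(5)] col_symI by blast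
    have "l3 = lx" using two_lines[OF l3(1) lx(1) e(3)[symmetric]] l3 lx e by blast
    moreover have "l3 = ly" using two_lines[OF l3(1) ly(1) e'(3)[symmetric]] l3 ly e' by blast
    ultimately show False using lxy by blast
  qed
  have "sp {x,y,z} = sp {x,y}"
  proof
    show "sp {x,y,z} \<subseteq> sp {x,y}" unfolding setperp_def by blast
  next
    show "sp {x,y} \<subseteq> sp {x,y,z}"
    proof
      fix q assume q: "q \<in> sp {x,y}"
      have "q \<in> pe z"
      proof -
        have "q = a \<or> q = b \<or> q = c" using q abc by blast
        moreover have "z \<in> pe a" "z \<in> pe b" using z(1) by (auto simp: pp_mem)
        ultimately show ?thesis using zc pe_sym abP by blast
      qed
      then show "q \<in> sp {x,y,z}" using q by (auto simp: sp_iff)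
    qed
  qed
  then show ?thesis using zP z nxz nyz by blast
qed


lemma fin3: "card S = 3 \<Longrightarrow> finite S" by (rule card_ge_0_finite) simp

lemma sp_pair_eq:
  assumes "t \<in> P" "t' \<in> P" "t \<noteq> t'" "card B = 3" "\<forall>s\<in>B. col t s \<and> col t' s"
  shows "sp {t,t'} = B"
proof -
  have "B \<subseteq> sp {t,t'}" using assms(5) col_pe by (auto simp: pp_mem)
  then show ?thesis using card_subset_eq[OF pp_fin[OF assms(1,2,3)]] pp_card[OF assms(1,2,3)] assms(4) by metis
qed

lemma cover:
  assumes cT: "card T = 3" and TP: "T \<subseteq> P" and cB: "card B = 3" and BP: "B \<subseteq> P"
    and cross: "\<forall>t\<in>T. \<forall>s\<in>B. col t s"
    and ncT: "\<forall>t\<in>T. \<forall>t'\<in>T. \<not> col t t'"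
    and pP: "p \<in> P"
  shows "\<exists>t\<in>T. p \<in> pe t"
proof (rule ccontr)
  assume np: "\<not> (\<exists>t\<in>T. p \<in> pe t)"
  have spT: "sp {t,t'} = B" if "t \<in> T" "t' \<in> T" "t \<noteq> t'" for t t'
    using sp_pair_eq[of t t' B] that TP cB cross by blast
  obtain t1 t2 t3 where t123: "T = {t1,t2,t3}" "t1 \<noteq> t2" "t2 \<noteq> t3" "t1 \<noteq> t3"
    using cT card_3_iff by metis
  have nB: "p \<notin> pe s" if sB: "s \<in> B" for s
  proof
    assume ps: "p \<in> pe s"
    have sP: "s \<in> P" using sB BP by blast
    have "p \<noteq> s"
    proof
      assume "p = s" then have "p \<in> pe t1" using cross sB t123 col_pe by blast
      then show False using np t123 by blast
    qed
    then have csp: "col s p" using ps pe_col by blast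
    have "\<exists>l\<in>L. s \<in> l \<and> t \<in> l \<and> p \<notin> l" if tT: "t \<in> T" for t
    proof -
      have "col t s" using cross tT sB by blast
      then obtain l where l: "l \<in> L" "t \<in> l" "s \<in> l" by (rule colE)
      have "p \<notin> l" using line_pe[OF l(1) l(2)] np tT by blast
      then show ?thesis using l by blast
    qed
    then obtain l1 l2 l3 where ls: "l1 \<in> L" "s \<in> l1" "t1 \<in> l1" "p \<notin> l1"
       "l2 \<in> L" "s \<in> l2" "t2 \<in> l2" "p \<notin> l2" "l3 \<in> L" "s \<in> l3" "t3 \<in> l3" "p \<notin> l3"
      using t123 by (metis insertCI)
    obtain l0 where l0: "l0 \<in> L" "s \<in> l0" "p \<in> l0" using csp by (rule colE)
    have d: "l1 \<noteq> l2" "l1 \<noteq> l3" "l2 \<noteq> l3"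
      using ls in_line_col ncT t123 by blast+
    show False using four_lines[OF sP l0(1) ls(1) ls(5) ls(9) l0(2) ls(2) ls(6) ls(10)] d l0 ls by blast
  qed
  define g where "g ts = (SOME q. col p q \<and> q \<in> pe (fst ts) \<and> q \<in> pe (snd ts))" for ts
  have gex: "col p (g ts) \<and> g ts \<in> pe (fst ts) \<and> g ts \<in> pe (snd ts)" if tsB: "ts \<in> T \<times> B" for ts
  proof -
    obtain t s where ts: "ts = (t,s)" "t \<in> T" "s \<in> B" using tsB by blast
    have "col t s" using cross ts by blast
    then obtain l where l: "l \<in> L" "t \<in> l" "s \<in> l" by (rule colE)
    have "p \<notin> l" using line_pe[OF l(1) l(2)] np ts by blast
    then obtain q where "q \<in> l" "col p q" using proj[OF pP l(1)] by blast
    then have "col p q \<and> q \<in> pe (fst ts) \<and> q \<in> pe (snd ts)" using line_pe[OF l(1)] l ts by simp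
    then show ?thesis unfolding g_def by (rule someI)
  qed
  have inj: "inj_on g (T \<times> B)"
  proof (rule inj_onI)
    fix ts ts' assume a: "ts \<in> T \<times> B" "ts' \<in> T \<times> B" "g ts = g ts'"
    obtain t s where ts: "ts = (t,s)" "t \<in> T" "s \<in> B" using a by blast
    obtain t' s' where ts': "ts' = (t',s')" "t' \<in> T" "s' \<in> B" using a by blast
    define q where "q = g ts"
    have q: "col p q" "q \<in> pe t" "q \<in> pe s" "q \<in> pe t'" "q \<in> pe s'"
      using gex[OF a(1)] gex[OF a(2)] a(3) ts ts' q_def by auto
    have qP: "q \<in> P" using q pe_iff by blast
    have pq: "p \<in> pe q" using q(1) col_pe col_symI by blast
    have "t = t'"
    proof (rule ccontr)
      assume tt: "t \<noteq> t'"
      have "q \<in> sp {t,t'}" using q by (simp add: pp_mem)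
      then have "q \<in> B" using spT[OF ts(2) ts'(2) tt] by blast
      then show False using nB pq by blast
    qed
    moreover have "s = s'"
    proof (rule ccontr)
      assume ss: "s \<noteq> s'"
      have "sp {s,s'} = T"
        using sp_pair_eq[of s s' T] ts ts' ss BP cT cross col_symI by blast
      moreover have "q \<in> sp {s,s'}" using q by (simp add: pp_mem)
      ultimately have "q \<in> T" by blast
      then show False using np pq by blast
    qed
    ultimately show "ts = ts'" using ts ts' by simp
  qed
  let ?Lp = "{l\<in>L. p \<in> l}"
  have sub: "g ` (T \<times> B) \<subseteq> (\<Union>l\<in>?Lp. l - {p})"
  proof
    fix q assume "q \<in> g ` (T \<times> B)"
    then have "col p q" using gex by blast
    then obtain l where "l \<in> L" "p \<in> l" "q \<in> l" "p \<noteq> q" by (rule colE)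
    then show "q \<in> (\<Union>l\<in>?Lp. l - {p})" by blast
  qed
  have finU: "finite (\<Union>l\<in>?Lp. l - {p})"
    using fin_lines[OF pP] fin3 line_card by auto
  have "card (g ` (T \<times> B)) = 9"
    using card_image[OF inj] cT cB by (simp add: card_cartesian_product)
  moreover have "card (g ` (T \<times> B)) \<le> card (\<Union>l\<in>?Lp. l - {p})"
    by (rule card_mono[OF finU sub])
  moreover have "card (\<Union>l\<in>?Lp. l - {p}) \<le> (\<Sum>l\<in>?Lp. card (l - {p}))"
    by (rule card_UN_le[OF fin_lines[OF pP]])
  moreover have "(\<Sum>l\<in>?Lp. card (l - {p})) = (\<Sum>l\<in>?Lp. 2)"
  proof (rule sum.cong)
    fix l assume "l \<in> ?Lp"
    then show "card (l - {p}) = 2" using line_card fin3 by auto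
  qed simp
  moreover have "(\<Sum>l\<in>?Lp. (2::nat)) = 6" using pt_lines[OF pP] by simp
  ultimately show False by linarith
qed


definition Ed :: "'p \<Rightarrow> 'p \<Rightarrow> 'p \<Rightarrow> 'p \<Rightarrow> bool" where
  "Ed A \<alpha> C \<gamma> \<longleftrightarrow> A \<noteq> C \<and> \<alpha> \<noteq> \<gamma> \<and> \<alpha> \<in> pe C \<and> \<gamma> \<in> pe A"

definition near :: "'p \<Rightarrow> 'p \<Rightarrow> 'p \<Rightarrow> 'p \<Rightarrow> bool" where
  "near A \<alpha> X u \<longleftrightarrow> (A = X \<and> \<alpha> = u) \<or> Ed A \<alpha> X u \<or>
     (\<exists>C \<gamma>. C \<in> P \<and> \<gamma> \<in> pe C \<and> Ed A \<alpha> C \<gamma> \<and> Ed C \<gamma> X u)"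

lemma nearI2: "C \<in> P \<Longrightarrow> \<gamma> \<in> pe C \<Longrightarrow> Ed A \<alpha> C \<gamma> \<Longrightarrow> Ed C \<gamma> X u \<Longrightarrow> near A \<alpha> X u"
  unfolding near_def by blast

lemma line_through: "col x y \<Longrightarrow> \<exists>l m. l \<in> L \<and> l = {x,y,m} \<and> m \<noteq> x \<and> m \<noteq> y \<and> m \<in> P"
proof -
  assume "col x y"
  then obtain l where l: "l \<in> L" "x \<in> l" "y \<in> l" "x \<noteq> y" by (rule colE)
  then obtain m where "l = {x,y,m}" "m \<noteq> x" "m \<noteq> y" using line_third by blast
  then show ?thesis using l line_sub by blast
qed

lemma NA: assumes AP: "A \<in> P" and a: "\<alpha> \<in> pe A" and s: "s \<in> pe A" shows "near A \<alpha> A s"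
proof -
  have aP: "\<alpha> \<in> P" and sP: "s \<in> P" using a s pe_iff by blast+
  show ?thesis
  proof (cases "\<alpha> = A")
    case aA: True
    show ?thesis
    proof (cases "s = A")
      case True then show ?thesis using aA unfolding near_def by blast
    next
      case False
      then have "col A s" using s pe_col by blast
      then obtain l m where l: "l \<in> L" "l = {A,s,m}" "m \<noteq> A" "m \<noteq> s" "m \<in> P" using line_through by blast
      have pm: "m \<in> pe A" "A \<in> pe m" "s \<in> pe m" "m \<in> pe m" using line_pe[OF l(1)] l(2) by auto
      show ?thesis by (rule nearI2[of m m]) (use pm l aA in \<open>auto simp: Ed_def\<close>)
    qed
  next
    case aA: False
    show ?thesis
    proof (cases "s = A")
      case sA: True
      have "col A \<alpha>" using a aA pe_col by blast
      then obtain l n where l: "l \<in> L" "l = {A,\<alpha>,n}" "n \<noteq> A" "n \<noteq> \<alpha>" "n \<in> P" using line_through by blast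
      have pn: "n \<in> pe A" "A \<in> pe \<alpha>" "n \<in> pe \<alpha>" "\<alpha> \<in> pe \<alpha>" using line_pe[OF l(1)] l(2) by auto
      show ?thesis by (rule nearI2[of \<alpha> n]) (use pn l aA sA aP in \<open>auto simp: Ed_def\<close>)
    next
      case sA: False
      show ?thesis
      proof (cases "s = \<alpha>")
        case True then show ?thesis unfolding near_def by blast
      next
        case sa: False
        show ?thesis
        proof (cases "\<alpha> \<in> pe s")
          case True
          have "A \<in> pe s" using pe_sym[OF s AP] .
          moreover have "A \<in> pe A" "s \<in> pe s" using AP sP pe_refl by blast+
          ultimately show ?thesis using True sA aA sP by (intro nearI2[of s A]) (auto simp: Ed_def)
        next
          case nas: False
          have cAa: "col A \<alpha>" and cAs: "col A s" using a s aA sA pe_col by blast+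
          have Ain: "A \<in> sp {\<alpha>,s}" using pe_sym[OF a AP] pe_sym[OF s AP] by (simp add: pp_mem)
          obtain C where C: "C \<in> sp {\<alpha>,s}" "C \<noteq> A"
            using card3_other[OF pp_card[OF aP sP] Ain] sa by metis
          have CP: "C \<in> P" using C(1) sp_iff by blast
          have Ca: "C \<in> pe \<alpha>" and Cs: "C \<in> pe s" using C(1) by (auto simp: pp_mem)
          have CA: "C \<notin> pe A"
          proof
            assume "C \<in> pe A"
            then have cAC: "col A C" using C(2) pe_col by blast
            have "C \<noteq> \<alpha>" using Cs nas by blast
            then have caC: "col \<alpha> C" using Ca pe_col by blast
            have "C \<noteq> s" using Ca nas pe_sym aP by blast
            then have csC: "col s C" using Cs pe_col by blast
            obtain l1 where l1: "l1 \<in> L" "A \<in> l1" "\<alpha> \<in> l1" "C \<in> l1" using triangle[OF cAa caC cAC] by blast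
            obtain l2 where l2: "l2 \<in> L" "A \<in> l2" "s \<in> l2" "C \<in> l2" using triangle[OF cAs csC cAC] by blast
            have "l1 = l2" using two_lines[OF l1(1) l2(1) C(2)[symmetric]] l1 l2 by blast
            then show False using line_pe[OF l1(1)] l1 l2 nas by blast
          qed
          have ACne: "A \<noteq> C" using C(2) by blast
          have ain: "\<alpha> \<in> sp {A,C}" "s \<in> sp {A,C}"
            using a s pe_sym[OF Ca aP] pe_sym[OF Cs sP] by (auto simp: pp_mem)
          obtain \<gamma> where g: "\<gamma> \<in> sp {A,C}" "\<gamma> \<noteq> \<alpha>" "\<gamma> \<noteq> s"
            using card3_third[OF pp_card[OF AP CP ACne] ain] by blast
          have gA: "\<gamma> \<in> pe A" and gC: "\<gamma> \<in> pe C" using g(1) by (auto simp: pp_mem)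
          have aC: "\<alpha> \<in> pe C" and sC: "s \<in> pe C" using pe_sym[OF Ca aP] pe_sym[OF Cs sP] by auto
          show ?thesis by (rule nearI2[OF CP gC]) (use ACne g gA aC sC in \<open>auto simp: Ed_def\<close>)
        qed
      qed
    qed
  qed
qed

lemma NB: assumes aP: "\<alpha> \<in> P" and A: "A \<in> pe \<alpha>" and X: "X \<in> pe \<alpha>" shows "near A \<alpha> X \<alpha>"
proof -
  have AP: "A \<in> P" and XP: "X \<in> P" using A X pe_iff by blast+
  show ?thesis
  proof (cases "A = \<alpha>")
    case aA: True
    show ?thesis
    proof (cases "X = \<alpha>")
      case True then show ?thesis using aA unfolding near_def by blast
    next
      case False
      then have "col X A" using X aA pe_col col_symI by blast
      then obtain l m where l: "l \<in> L" "l = {X,A,m}" "m \<noteq> X" "m \<noteq> A" "m \<in> P" using line_through by blast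
      have pm: "m \<in> pe A" "A \<in> pe m" "m \<in> pe X" "m \<in> pe m" using line_pe[OF l(1)] l(2) by auto
      show ?thesis by (rule nearI2[of m m]) (use pm l aA in \<open>auto simp: Ed_def\<close>)
    qed
  next
    case aA: False
    show ?thesis
    proof (cases "X = \<alpha>")
      case Xa: True
      have "col A \<alpha>" using A aA pe_col col_symI by blast
      then obtain l n where l: "l \<in> L" "l = {A,\<alpha>,n}" "n \<noteq> A" "n \<noteq> \<alpha>" "n \<in> P" using line_through by blast
      have pn: "A \<in> pe n" "\<alpha> \<in> pe n" "A \<in> pe \<alpha>" "A \<in> pe A" using line_pe[OF l(1)] l(2) by auto
      show ?thesis by (rule nearI2[of n A]) (use pn l aA Xa in \<open>auto simp: Ed_def\<close>)
    next
      case Xa: False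
      show ?thesis
      proof (cases "X = A")
        case True then show ?thesis unfolding near_def by blast
      next
        case XA: False
        show ?thesis
        proof (cases "A \<in> pe X")
          case True
          have "X \<in> pe A" using pe_sym[OF True XP] .
          moreover have "\<alpha> \<in> pe \<alpha>" "X \<in> pe X" using aP XP pe_refl by blast+
          ultimately show ?thesis using X aA Xa aP by (intro nearI2[of \<alpha> X]) (auto simp: Ed_def)
        next
          case nAX: False
          have cAa: "col A \<alpha>" and cXa: "col X \<alpha>" using A X aA Xa pe_col col_symI by blast+
          have ain: "\<alpha> \<in> sp {A,X}" using pe_sym[OF A aP] pe_sym[OF X aP] by (simp add: pp_mem)
          obtain \<gamma> where g: "\<gamma> \<in> sp {A,X}" "\<gamma> \<noteq> \<alpha>"
            using card3_other[OF pp_card[OF AP XP XA[symmetric]] ain] by metis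
          have gP: "\<gamma> \<in> P" using g(1) sp_iff by blast
          have gA: "\<gamma> \<in> pe A" and gX: "\<gamma> \<in> pe X" using g(1) by (auto simp: pp_mem)
          have ga: "\<gamma> \<notin> pe \<alpha>"
          proof
            assume "\<gamma> \<in> pe \<alpha>"
            then have cag: "col \<alpha> \<gamma>" using g(2) pe_col by blast
            have "\<gamma> \<noteq> A" using gX nAX by blast
            then have cAg: "col A \<gamma>" using gA pe_col by blast
            have "\<gamma> \<noteq> X" using gA nAX pe_sym AP by blast
            then have cXg: "col X \<gamma>" using gX pe_col by blast
            obtain l1 where l1: "l1 \<in> L" "A \<in> l1" "\<alpha> \<in> l1" "\<gamma> \<in> l1" using triangle[OF cAa cag cAg] by blast
            obtain l2 where l2: "l2 \<in> L" "X \<in> l2" "\<alpha> \<in> l2" "\<gamma> \<in> l2" using triangle[OF cXa cag cXg] by blast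
            have "l1 = l2" using two_lines[OF l1(1) l2(1) g(2)[symmetric]] l1 l2 by blast
            then show False using line_pe[OF l1(1)] l1 l2 nAX by blast
          qed
          have agne: "\<alpha> \<noteq> \<gamma>" using g(2) by blast
          have Ain: "A \<in> sp {\<alpha>,\<gamma>}" "X \<in> sp {\<alpha>,\<gamma>}"
            using A X pe_sym[OF gA AP] pe_sym[OF gX XP] by (auto simp: pp_mem)
          obtain C where C: "C \<in> sp {\<alpha>,\<gamma>}" "C \<noteq> A" "C \<noteq> X"
            using card3_third[OF pp_card[OF aP gP agne] Ain] by blast
          have CP: "C \<in> P" using C(1) sp_iff by blast
          have Ca: "C \<in> pe \<alpha>" and Cg: "C \<in> pe \<gamma>" using C(1) by (auto simp: pp_mem)
          have aC: "\<alpha> \<in> pe C" and gC: "\<gamma> \<in> pe C" using pe_sym[OF Ca aP] pe_sym[OF Cg gP] by auto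
          show ?thesis by (rule nearI2[OF CP gC]) (use C g gA gX aC in \<open>auto simp: Ed_def\<close>)
        qed
      qed
    qed
  qed
qed

lemma key:
  assumes XYZ: "X \<in> P" "Y \<in> P" "Z \<in> P" and dT: "X \<noteq> Y" "X \<noteq> Z" "Y \<noteq> Z"
    and dB: "u \<noteq> v" "u \<noteq> w" "v \<noteq> w"
    and cross: "\<forall>t\<in>{X,Y,Z}. \<forall>s\<in>{u,v,w}. s \<in> pe t"
    and AP: "A \<in> P" and aA: "\<alpha> \<in> pe A"
    and cov: "A \<notin> {X,Y,Z} \<Longrightarrow> \<alpha> \<notin> {u,v,w} \<Longrightarrow>
       (\<exists>C\<in>{X,Y,Z}. \<alpha> \<in> pe C) \<and> (\<exists>\<gamma>\<in>{u,v,w}. \<gamma> \<in> pe A)"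
  shows "near A \<alpha> X u \<or> near A \<alpha> Y v \<or> near A \<alpha> Z w"
proof -
  have aP: "\<alpha> \<in> P" using aA pe_iff by blast
  have Ai: "A \<in> pe \<alpha>" using pe_sym[OF aA AP] .
  show ?thesis
  proof (cases "A \<in> {X,Y,Z}")
    case True
    then show ?thesis using NA[OF AP aA] cross by auto
  next
    case nA: False
    show ?thesis
    proof (cases "\<alpha> \<in> {u,v,w}")
      case True
      have "X \<in> pe u" "Y \<in> pe v" "Z \<in> pe w" "X \<in> pe v" "Y \<in> pe u" "Z \<in> pe u" "X \<in> pe w" "Y \<in> pe w" "Z \<in> pe v"
        using cross pe_sym XYZ by auto
      then show ?thesis using NB[OF aP Ai] True by auto
    next
      case nB: False
      obtain C \<gamma> where Cg: "C \<in> {X,Y,Z}" "\<alpha> \<in> pe C" "\<gamma> \<in> {u,v,w}" "\<gamma> \<in> pe A"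
        using cov[OF nA nB] by blast
      have CP: "C \<in> P" using Cg XYZ by blast
      have gC: "\<gamma> \<in> pe C" using cross Cg by blast
      have E1: "Ed A \<alpha> C \<gamma>" using Cg nA nB unfolding Ed_def by blast
      have E2: "Ed C \<gamma> X1 u1" if "X1 \<in> {X,Y,Z}" "u1 \<in> {u,v,w}" "X1 \<noteq> C" "u1 \<noteq> \<gamma>" for X1 u1
      proof -
        have "\<gamma> \<in> pe X1" "u1 \<in> pe C" using cross that Cg by blast+
        then show ?thesis using that unfolding Ed_def by blast
      qed
      have "(X \<noteq> C \<and> u \<noteq> \<gamma>) \<or> (Y \<noteq> C \<and> v \<noteq> \<gamma>) \<or> (Z \<noteq> C \<and> w \<noteq> \<gamma>)"
        using dT dB by blast
      then show ?thesis using nearI2[OF CP gC E1 E2] by blast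
    qed
  qed
qed

end

locale iso2 = g1: gq P L + g2: gq P' L'
  for P :: "'a set" and L :: "'a set set" and P' :: "'b set" and L' :: "'b set set" +
  fixes f :: "'a \<Rightarrow> 'b"
  assumes iso: "geom_iso f P L P' L'"
begin

lemma inj: "inj_on f P" and img: "f ` P = P'" and limg: "(\<lambda>l. f ` l) ` L = L'"
  using iso unfolding geom_iso_def bij_betw_def by auto

lemma fP: "x \<in> P \<Longrightarrow> f x \<in> P'" using img by blast

lemma line_tr: assumes "T \<subseteq> P" shows "f ` T \<in> L' \<longleftrightarrow> T \<in> L"
proof
  assume "f ` T \<in> L'"
  then have "f ` T \<in> (\<lambda>l. f ` l) ` L" using limg by simp
  then obtain l where l: "l \<in> L" "f ` T = f ` l" by (rule imageE)
  have "l \<subseteq> P" using g1.line_sub l(1) by blast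
  then have "l = T" using inj_on_image_eq_iff[OF inj \<open>l \<subseteq> P\<close> assms] l(2) by simp
  then show "T \<in> L" using l by blast
next
  assume "T \<in> L" then show "f ` T \<in> L'" using limg by (metis imageI)
qed

lemma col_tr: assumes "x \<in> P" "y \<in> P" shows "collinear L' (f x) (f y) \<longleftrightarrow> collinear L x y"
proof
  assume c: "collinear L' (f x) (f y)"
  then have "f x \<noteq> f y" unfolding collinear_def by blast
  then have xy: "x \<noteq> y" by blast
  obtain l' where l': "l' \<in> L'" "f x \<in> l'" "f y \<in> l'" using c unfolding collinear_def by blast
  have "l' \<in> (\<lambda>l. f ` l) ` L" using limg l' by simp
  then obtain l where l: "l \<in> L" "l' = f ` l" by (rule imageE)
  have lP: "l \<subseteq> P" using g1.line_sub l by blast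
  have "f x \<in> f ` l" using l(2) l'(2) by simp
  then obtain x1 where x1: "f x = f x1" "x1 \<in> l" by (rule imageE)
  have "x1 \<in> P" using x1 lP by blast
  then have "x1 = x" using inj_onD[OF inj x1(1) assms(1)] by simp
  have "f y \<in> f ` l" using l(2) l'(3) by simp
  then obtain y1 where y1: "f y = f y1" "y1 \<in> l" by (rule imageE)
  have "y1 \<in> P" using y1 lP by blast
  then have "y1 = y" using inj_onD[OF inj y1(1) assms(2)] by simp
  show "collinear L x y" unfolding collinear_def using xy l(1) x1(2) y1(2) \<open>x1 = x\<close> \<open>y1 = y\<close> by blast
next
  assume c: "collinear L x y"
  then obtain l where l: "l \<in> L" "x \<in> l" "y \<in> l" "x \<noteq> y" unfolding collinear_def by blast
  have "f x \<noteq> f y" using inj_onD[OF inj] assms l by blast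
  moreover have "f ` l \<in> L'" using limg l by (metis imageI)
  ultimately show "collinear L' (f x) (f y)" unfolding collinear_def using l by blast
qed

lemma pe_tr: assumes "q \<in> P" "t \<in> P" shows "f q \<in> perp P' L' (f t) \<longleftrightarrow> q \<in> perp P L t"
proof -
  have "f q = f t \<longleftrightarrow> q = t" using inj_onD[OF inj] assms by blast
  then show ?thesis unfolding perp_def using col_tr[OF assms(2,1)] assms fP by blast
qed

lemma sp_tr: assumes TP: "T \<subseteq> P" shows "setperp P' L' (f ` T) = f ` setperp P L T"
proof
  show "setperp P' L' (f ` T) \<subseteq> f ` setperp P L T"
  proof
    fix y assume y: "y \<in> setperp P' L' (f ` T)"
    then have "y \<in> P'" unfolding setperp_def by blast
    then obtain q where q: "q \<in> P" "y = f q" using img by blast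
    have "\<forall>t\<in>T. q \<in> perp P L t" using y q pe_tr TP unfolding setperp_def by blast
    then show "y \<in> f ` setperp P L T" using q unfolding setperp_def by blast
  qed
next
  show "f ` setperp P L T \<subseteq> setperp P' L' (f ` T)"
  proof
    fix y assume "y \<in> f ` setperp P L T"
    then obtain q where q: "q \<in> setperp P L T" "y = f q" by blast
    then have qP: "q \<in> P" and "\<forall>t\<in>T. q \<in> perp P L t" unfolding setperp_def by blast+
    then have "\<forall>t\<in>f ` T. y \<in> perp P' L' t" using pe_tr TP q by blast
    then show "y \<in> setperp P' L' (f ` T)" using fP qP q unfolding setperp_def by blast
  qed
qed

abbreviation Pts where "Pts \<equiv> SPts f P P' L'"
abbreviation Lns where "Lns \<equiv> SLines f P L P' L'"
abbreviation Adj where "Adj \<equiv> adj Pts Lns"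

lemma SPts_iff: "(x,u) \<in> Pts \<longleftrightarrow> x \<in> P \<and> u \<in> perp P' L' (f x)"
  unfolding SPts_def by blast

lemma third_pt:
  assumes AP: "A \<in> P'" and CP: "C \<in> P'" and AC: "A \<noteq> C"
  shows "\<exists>E\<in>P'. E \<noteq> A \<and> E \<noteq> C \<and> setperp P' L' {A,C,E} = setperp P' L' {A,C} \<and>
     ({A,C,E} \<in> L' \<or> (\<not> collinear L' A C \<and> \<not> collinear L' A E \<and> \<not> collinear L' C E))"
proof (cases "collinear L' A C")
  case True
  then obtain l m where l: "l \<in> L'" "l = {A,C,m}" "m \<noteq> A" "m \<noteq> C" "m \<in> P'" using g2.line_through by blast
  have "setperp P' L' {A,C,m} = l" using g2.sp_line l by blast
  moreover have "setperp P' L' {A,C} = l" using g2.pp_line[OF l(1)] l AC by blast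
  ultimately show ?thesis using l by (intro bexI[of _ m]) auto
next
  case False
  then show ?thesis using g2.regular[OF AP CP AC False] by blast
qed

lemma edge:
  assumes th: "(a,\<alpha>) \<in> Pts" and ce: "(c,\<gamma>) \<in> Pts" and E: "g2.Ed (f a) \<alpha> (f c) \<gamma>"
  shows "((a,\<alpha>),(c,\<gamma>)) \<in> Adj"
proof -
  have aP: "a \<in> P" and a1: "\<alpha> \<in> perp P' L' (f a)" using th SPts_iff by blast+
  have cP: "c \<in> P" and c1: "\<gamma> \<in> perp P' L' (f c)" using ce SPts_iff by blast+
  have AC: "f a \<noteq> f c" and ag: "\<alpha> \<noteq> \<gamma>" and a2: "\<alpha> \<in> perp P' L' (f c)" and c2: "\<gamma> \<in> perp P' L' (f a)"
    using E unfolding g2.Ed_def by blast+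
  have ac: "a \<noteq> c" using AC by blast
  have in2: "\<alpha> \<in> setperp P' L' {f a, f c}" "\<gamma> \<in> setperp P' L' {f a, f c}"
    using a1 a2 c1 c2 by (auto simp: g2.pp_mem)
  obtain E' where E': "E' \<in> P'" "E' \<noteq> f a" "E' \<noteq> f c"
     "setperp P' L' {f a, f c, E'} = setperp P' L' {f a, f c}"
     "{f a, f c, E'} \<in> L' \<or> (\<not> collinear L' (f a) (f c) \<and> \<not> collinear L' (f a) E' \<and> \<not> collinear L' (f c) E')"
    using third_pt[OF fP[OF aP] fP[OF cP] AC] by blast
  obtain e where e: "e \<in> P" "f e = E'" using E'(1) img by blast
  have ae: "a \<noteq> e" "c \<noteq> e" using E' e by blast+
  have c3: "card (setperp P' L' {f a, f c}) = 3" using g2.pp_card[OF fP[OF aP] fP[OF cP] AC] .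
  obtain \<delta> where d: "\<delta> \<in> setperp P' L' {f a, f c}" "\<delta> \<noteq> \<alpha>" "\<delta> \<noteq> \<gamma>"
    using card3_third[OF c3 in2] by blast
  have sp3: "setperp P' L' (f ` {a,c,e}) = {\<alpha>,\<gamma>,\<delta>}"
    using E'(4) e card3_all[OF c3 in2 d(1) ag d(2)[symmetric] d(3)[symmetric]] by simp
  have TP: "{a,c,e} \<subseteq> P" using aP cP e by blast
  have LT: "{a,c,e} \<in> L \<or> complete_triad P L {a,c,e}"
  proof (cases "{f a, f c, E'} \<in> L'")
    case True
    then have "f ` {a,c,e} \<in> L'" using e by simp
    then show ?thesis using line_tr[OF TP] by blast
  next
    case False
    then have nc: "\<not> collinear L a c" "\<not> collinear L a e" "\<not> collinear L c e"
      using E'(5) col_tr aP cP e by auto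
    have card: "card {a,c,e} = 3" using ac ae by simp
    have "\<forall>x\<in>{a,c,e}. \<forall>y\<in>{a,c,e}. x \<noteq> y \<longrightarrow> \<not> collinear L x y"
      using nc g1.col_sym by auto
    then have "triad P L {a,c,e}" unfolding triad_def using TP card by simp
    moreover have "card (setperp P L {a,c,e}) = 3"
    proof -
      have "card (f ` setperp P L {a,c,e}) = card (setperp P L {a,c,e})"
      proof (rule card_image)
        have "setperp P L {a,c,e} \<subseteq> P" unfolding setperp_def by blast
        then show "inj_on f (setperp P L {a,c,e})" using inj_on_subset[OF inj] by blast
      qed
      moreover have "f ` setperp P L {a,c,e} = {\<alpha>,\<gamma>,\<delta>}" using sp_tr[OF TP] sp3 by simp
      ultimately show ?thesis using ag d by simp
    qed
    ultimately show ?thesis unfolding complete_triad_def by blast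
  qed
  have eP: "(e,\<delta>) \<in> Pts"
  proof -
    have "\<delta> \<in> setperp P' L' {f a, f c, E'}" using E'(4) d by simp
    then have "\<delta> \<in> perp P' L' (f e)" using e unfolding setperp_def by blast
    then show ?thesis using e SPts_iff by blast
  qed
  have sub: "{(a,\<alpha>),(c,\<gamma>),(e,\<delta>)} \<subseteq> Pts" using th ce eP by blast
  have "{(a,\<alpha>),(c,\<gamma>),(e,\<delta>)} \<in> Lns"
    unfolding SLines_def mem_Collect_eq
    apply (rule exI[of _ a], rule exI[of _ c], rule exI[of _ e])
    apply (rule exI[of _ \<alpha>], rule exI[of _ \<gamma>], rule exI[of _ \<delta>])
    apply (intro conjI)
    apply (rule refl)
    apply (rule ac)
    apply (rule ae(1))
    apply (rule ae(2))
    apply (rule LT)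
    apply (rule ag)
    apply (rule d(2)[symmetric])
    apply (rule d(3)[symmetric])
    apply (rule sp3[symmetric])
    apply (rule sub)
    done
  then have "collinear Lns (a,\<alpha>) (c,\<gamma>)" unfolding collinear_def using ac by blast
  then show ?thesis unfolding adj_def using th ce by simp
qed


lemma near_lift:
  assumes th: "(a,\<alpha>) \<in> Pts" and pt: "(x,u) \<in> Pts" and n: "g2.near (f a) \<alpha> (f x) u"
  shows "\<exists>k<3. ((a,\<alpha>),(x,u)) \<in> Adj ^^ k"
proof -
  have aP: "a \<in> P" and xP: "x \<in> P" using th pt SPts_iff by blast+
  consider (eq) "f a = f x \<and> \<alpha> = u" | (ed) "g2.Ed (f a) \<alpha> (f x) u"
    | (two) C \<gamma> where "C \<in> P'" "\<gamma> \<in> perp P' L' C" "g2.Ed (f a) \<alpha> C \<gamma>" "g2.Ed C \<gamma> (f x) u"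
    using n unfolding g2.near_def by blast
  then show ?thesis
  proof cases
    case eq
    then have "a = x" using inj_onD[OF inj _ aP xP] by blast
    then have "((a,\<alpha>),(x,u)) \<in> Adj ^^ 0" using eq by simp
    then show ?thesis by (intro exI[of _ 0]) simp
  next
    case ed
    then have "((a,\<alpha>),(x,u)) \<in> Adj ^^ 1" using edge[OF th pt] by simp
    then show ?thesis by (intro exI[of _ 1]) simp
  next
    case two
    define c where "c = inv_into P f C"
    have cP: "c \<in> P" unfolding c_def using two(1) img inv_into_into by metis
    have fc: "f c = C" unfolding c_def using two(1) img f_inv_into_f by metis
    have ce: "(c,\<gamma>) \<in> Pts" using cP fc two(2) SPts_iff by simp
    have e1: "((a,\<alpha>),(c,\<gamma>)) \<in> Adj" using edge[OF th ce] two(3) fc by simp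
    have e2: "((c,\<gamma>),(x,u)) \<in> Adj" using edge[OF ce pt] two(4) fc by simp
    have "((a,\<alpha>),(x,u)) \<in> Adj ^^ 2" using e1 e2 by (auto simp: numeral_2_eq_2 relpow.simps)
    then show ?thesis by (intro exI[of _ 2]) simp
  qed
qed

end

lemma final_step:
  assumes ex: "\<exists>pt\<in>{p,q,r}. \<exists>k<3. (\<theta>,pt) \<in> R ^^ k" and rp: "(r,p) \<in> R"
    and hp: "has_dist R \<theta> p 3" and hq: "has_dist R \<theta> q 3"
  shows "has_dist R \<theta> r 2"
proof -
  have np: "\<And>k. k < 3 \<Longrightarrow> (\<theta>,p) \<notin> R ^^ k" using hp unfolding has_dist_def by blast
  have nq: "\<And>k. k < 3 \<Longrightarrow> (\<theta>,q) \<notin> R ^^ k" using hq unfolding has_dist_def by blast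
  obtain k where k: "k < 3" "(\<theta>,r) \<in> R ^^ k" using ex np nq by blast
  have lt: "(\<theta>,r) \<notin> R ^^ j" if "j < 2" for j
  proof
    assume "(\<theta>,r) \<in> R ^^ j"
    then have "(\<theta>,p) \<in> R ^^ Suc j" using rp by (auto simp: relpow.simps)
    then show False using np[of "Suc j"] that by simp
  qed
  have "k = 2" using k lt by (metis less_2_cases_iff not_less_less_Suc_eq numeral_2_eq_2 numeral_3_eq_3)
  then show ?thesis unfolding has_dist_def using k lt by blast
qed


context iso2
begin

lemma main:
  assumes Ln: "Ln \<in> Lns" and th: "(a,\<alpha>) \<in> Pts"
  shows "\<exists>pt\<in>Ln. \<exists>k<3. ((a,\<alpha>),pt) \<in> Adj ^^ k"
proof -
  obtain x y z u v w where Lx: "Ln = {(x,u),(y,v),(z,w)}" "x \<noteq> y" "x \<noteq> z" "y \<noteq> z"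
     "{x,y,z} \<in> L \<or> complete_triad P L {x,y,z}" "u \<noteq> v" "u \<noteq> w" "v \<noteq> w"
     "{u,v,w} = setperp P' L' (f ` {x,y,z})" "{(x,u),(y,v),(z,w)} \<subseteq> Pts"
    using Ln unfolding SLines_def mem_Collect_eq by (elim exE conjE) (rule that; assumption)
  have pts: "(x,u) \<in> Pts" "(y,v) \<in> Pts" "(z,w) \<in> Pts" using Lx(10) by auto
  have xyzP: "x \<in> P" "y \<in> P" "z \<in> P" using pts SPts_iff by blast+
  have aP: "a \<in> P" and aA: "\<alpha> \<in> perp P' L' (f a)" using th SPts_iff by blast+
  have AP: "f a \<in> P'" using fP aP by blast
  have XP: "f x \<in> P'" "f y \<in> P'" "f z \<in> P'" using fP xyzP by blast+
  have dT: "f x \<noteq> f y" "f x \<noteq> f z" "f y \<noteq> f z" using inj_onD[OF inj] xyzP Lx(2-4) by blast+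
  have spB: "setperp P' L' {f x, f y, f z} = {u,v,w}" using Lx(9) by simp
  have Bsp: "s \<in> setperp P' L' {f x, f y, f z}" if "s \<in> {u,v,w}" for s using spB that by simp
  have cross: "\<forall>t\<in>{f x, f y, f z}. \<forall>s\<in>{u,v,w}. s \<in> perp P' L' t"
    using Bsp unfolding setperp_def by blast
  have BP: "{u,v,w} \<subseteq> P'" using Bsp unfolding setperp_def by blast
  have cov: "(\<exists>C\<in>{f x, f y, f z}. \<alpha> \<in> perp P' L' C) \<and> (\<exists>\<gamma>\<in>{u,v,w}. \<gamma> \<in> perp P' L' (f a))"
    if nA: "f a \<notin> {f x, f y, f z}" and nB: "\<alpha> \<notin> {u,v,w}"
  proof -
    have alP: "\<alpha> \<in> P'" using aA g2.pe_iff by blast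
    show ?thesis
    proof (cases "{x,y,z} \<in> L")
      case True
      then have l: "{f x, f y, f z} \<in> L'" using line_tr[of "{x,y,z}"] xyzP by simp
      then have eq: "{u,v,w} = {f x, f y, f z}" using g2.sp_line spB by simp
      obtain q1 where q1: "q1 \<in> {f x, f y, f z}" "collinear L' \<alpha> q1"
        using g2.proj[OF alP l] nB eq by blast
      obtain q2 where q2: "q2 \<in> {f x, f y, f z}" "collinear L' (f a) q2"
        using g2.proj[OF AP l] nA by blast
      have "\<alpha> \<in> perp P' L' q1" using g2.col_pe g2.col_symI q1(2) by blast
      moreover have "q2 \<in> perp P' L' (f a)" using g2.col_pe q2(2) by blast
      ultimately show ?thesis using q1(1) q2(1) eq by blast
    next
      case False
      then have ct: "complete_triad P L {x,y,z}" using Lx(5) by blast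
      then have "\<forall>p\<in>{x,y,z}. \<forall>p'\<in>{x,y,z}. p \<noteq> p' \<longrightarrow> \<not> collinear L p p'"
        unfolding complete_triad_def triad_def by blast
      then have ncxyz: "\<not> collinear L x y" "\<not> collinear L x z" "\<not> collinear L y z" using Lx(2-4) by blast+
      have nc: "\<not> collinear L' (f x) (f y)" "\<not> collinear L' (f x) (f z)" "\<not> collinear L' (f y) (f z)"
        using ncxyz col_tr xyzP by blast+
      have ncT: "\<forall>t\<in>{f x, f y, f z}. \<forall>t'\<in>{f x, f y, f z}. \<not> collinear L' t t'"
        using nc g2.col_symI g2.col_ne by blast
      have colTB: "collinear L' t s" if "t \<in> {f x, f y, f z}" "s \<in> {u,v,w}" for t s
      proof -
        have sp: "s \<in> perp P' L' t" using cross that by blast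
        have "s \<noteq> t"
        proof
          assume st: "s = t"
          obtain t' where "t' \<in> {f x, f y, f z}" "t' \<noteq> t" using that(1) dT by blast
          moreover have "s \<in> perp P' L' t'" using cross that(2) \<open>t' \<in> {f x, f y, f z}\<close> by blast
          ultimately have t'T: "t' \<in> {f x, f y, f z}" and "t \<in> perp P' L' t'" and "t' \<noteq> t" using st by simp_all
          then have "collinear L' t' t" using g2.pe_col by metis
          then show False using ncT t'T that(1) by blast
        qed
        then show ?thesis using sp g2.pe_col by blast
      qed
      have ncB: "\<forall>s\<in>{u,v,w}. \<forall>s'\<in>{u,v,w}. \<not> collinear L' s s'"
      proof (intro ballI notI)
        fix s s' assume s: "s \<in> {u,v,w}" "s' \<in> {u,v,w}" "collinear L' s s'"
        have "s \<noteq> s'" using s(3) g2.col_ne by blast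
        have "collinear L' (f x) (f y)"
          using g2.quad[of "f x" s s' "f y"] colTB s \<open>s \<noteq> s'\<close> dT by blast
        then show False using nc by blast
      qed
      have cT: "card {f x, f y, f z} = 3" using dT by simp
      have cB: "card {u,v,w} = 3" using Lx(6-8) by simp
      have TP: "{f x, f y, f z} \<subseteq> P'" using XP by blast
      obtain C where C: "C \<in> {f x, f y, f z}" "\<alpha> \<in> perp P' L' C"
        using g2.cover[OF cT TP cB BP _ ncT alP] colTB by blast
      have crossBT: "\<forall>s\<in>{u,v,w}. \<forall>t\<in>{f x, f y, f z}. collinear L' s t"
        using colTB g2.col_symI by blast
      obtain \<gamma> where g: "\<gamma> \<in> {u,v,w}" "f a \<in> perp P' L' \<gamma>"
        using g2.cover[OF cB BP cT TP crossBT ncB AP] by blast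
      have "\<gamma> \<in> perp P' L' (f a)" using g2.pe_sym[OF g(2)] g(1) BP by blast
      then show ?thesis using C g(1) by blast
    qed
  qed
  have "g2.near (f a) \<alpha> (f x) u \<or> g2.near (f a) \<alpha> (f y) v \<or> g2.near (f a) \<alpha> (f z) w"
    by (rule g2.key[OF XP dT Lx(6-8) cross AP aA cov])
  then show ?thesis using near_lift[OF th] pts Lx(1) by blast
qed

end

theorem proposition3p6:
  fixes P :: "'a set" and L :: "'a set set" and P' :: "'b set" and L' :: "'b set set"
    and f :: "'a \<Rightarrow> 'b"
    and Ln :: "('a \<times> 'b) set" and \<theta> p q r :: "'a \<times> 'b"
  assumes "GQ22 P L" and "GQ22 P' L'" and "geom_iso f P L P' L'"
    and "Ln \<in> SLines f P L P' L'" and "\<theta> \<in> SPts f P P' L'"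
    and "Ln = {p, q, r}" and "p \<noteq> q" and "p \<noteq> r" and "q \<noteq> r"
    and "has_dist (adj (SPts f P P' L') (SLines f P L P' L')) \<theta> p 3"
    and "has_dist (adj (SPts f P P' L') (SLines f P L P' L')) \<theta> q 3"
  shows "has_dist (adj (SPts f P P' L') (SLines f P L P' L')) \<theta> r 2"
proof -
  interpret iso2 P L P' L' f
    by (intro iso2.intro iso2_axioms.intro gq.intro) (rule assms)+
  obtain a \<alpha> where th: "\<theta> = (a,\<alpha>)" by (cases \<theta>)
  have ex: "\<exists>pt\<in>{p,q,r}. \<exists>k<3. (\<theta>,pt) \<in> Adj ^^ k"
    using main[OF assms(4)] assms(5,6) th by blast
  have sub: "Ln \<subseteq> SPts f P P' L'"
    using assms(4) unfolding SLines_def mem_Collect_eq by (elim exE conjE) simp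
  have rp: "r \<in> Ln" "p \<in> Ln" using assms(6) by simp_all
  have "collinear Adj_lines r p" if "Adj_lines = SLines f P L P' L'" for Adj_lines
    unfolding collinear_def using rp assms(4,8) that by blast
  then have "collinear (SLines f P L P' L') r p" by blast
  then have "(r,p) \<in> Adj" unfolding adj_def using sub rp by auto
  then show ?thesis using final_step[OF ex _ assms(10,11)] by blast
qed

end
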